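(* Let $K$ be a field, $S=K[[x_1,\dots,x_n]]$ with maximal ideal $\mathfrak{m}$, let $E$ be the $S$-module described in the context, and fix a term order $\prec$ on $E$. Let $N\subset E$ be an $S$-submodule. If $0\neq\eta\in N:_E\mathfrak{m}$, then $\mathrm{LT}_\prec(\eta)\in \langle \mathrm{LT}_\prec(N)\rangle:_E\mathfrak{m}$; that is, for every $i=1,\dots,n$, either $x_i\,\mathrm{LT}_\prec(\eta)=0$ or $x_i\,\mathrm{LT}_\prec(\eta)\in\mathrm{LT}_\prec(N)$.
   Context: $E=K[x_1^{-1},\dots,x_n^{-1}]\cdot\frac{1}{x_1\cdots x_n}$ is the $K$-vector space with basis the "terms" $\frac{1}{x^{\alpha+1}}=\frac{1}{x_1^{\alpha_1+1}\cdots x_n^{\alpha_n+1}}$, $\alpha\in\mathbb{Z}_{\ge0}^n$, with $S$-module structure given by $x^{\gamma}\cdot\frac{1}{x^{\beta+1}}=\frac{1}{x^{\beta-\gamma+1}}$ if $\beta-\gamma\in\mathbb{Z}^n_{\ge0}$ and $0$ otherwise, extended bilinearly (this is the injective hull of $K$ as an $S$-module). A term order on $E$ is a total order $\prec$ on the set of terms such that (1) $\frac{1}{x^{1}}\preceq\frac{1}{x^{\alpha+1}}$ for all $\alpha$ (where $x^1=x_1\cdots x_n$), and (2) $\frac{1}{x^{\alpha+1}}\prec\frac{1}{x^{\beta+1}}$ implies $\frac{1}{x^{\alpha+\gamma+1}}\prec\frac{1}{x^{\beta+\gamma+1}}$ for all $\alpha,\beta,\gamma\in\mathbb{Z}^n_{\ge0}$.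 For $0\ne\eta\in E$, $\mathrm{LT}_\prec(\eta)$ is the $\prec$-largest term occurring in $\eta$ with nonzero coefficient. For a subset $N\subset E$, $\mathrm{LT}_\prec(N)=\{\mathrm{LT}_\prec(\eta)\mid 0\ne\eta\in N\}$, and $\langle\mathrm{LT}_\prec(N)\rangle$ is the $S$-submodule it generates. For an $S$-submodule $N\subset E$, $N:_E\mathfrak{m}=\{\eta\in E\mid \mathfrak{m}\eta\subset N\}$. *)

theory Defs
  imports Main
begin

text \<open>Variables x_i are indexed by a finite type 'n (so n = CARD('n)).
  A term 1/x^(alpha+1) is identified with its exponent alpha :: 'n => nat.
  An element of E is a finitely supported coefficient function on terms;
  a power series in S = K[[x]] is an arbitrary coefficient function on monomials.\<close>

type_synonym 'n expo = "'n \<Rightarrow> nat"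
type_synonym ('n,'k) inj_hull = "'n expo \<Rightarrow> 'k"
type_synonym ('n,'k) pseries = "'n expo \<Rightarrow> 'k"

definition inE :: "('n,'k::zero) inj_hull \<Rightarrow> bool" where
  "inE \<eta> \<longleftrightarrow> finite {\<alpha>. \<eta> \<alpha> \<noteq> 0}"

definition Eset :: "('n,'k::zero) inj_hull set" where
  "Eset = {\<eta>. inE \<eta>}"

text \<open>S-action: x^gamma * 1/x^(beta+1) = 1/x^(beta-gamma+1) if beta >= gamma, else 0,
  extended bilinearly; the coefficient at delta of f*eta is sum_gamma f(gamma) eta(delta+gamma).\<close>
definition act :: "('n,'k::comm_ring_1) pseries \<Rightarrow> ('n,'k) inj_hull \<Rightarrow> ('n,'k) inj_hull" where
  "act f \<eta> = (\<lambda>\<delta>. \<Sum>\<gamma>\<in>{\<gamma>. \<eta> (\<lambda>j. \<delta> j + \<gamma> j) \<noteq> 0}. f \<gamma> * \<eta> (\<lambda>j. \<delta> j + \<gamma> j))"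

definition term_E :: "'n expo \<Rightarrow> ('n,'k::{zero,one}) inj_hull" where
  "term_E \<alpha> = (\<lambda>\<beta>. if \<beta> = \<alpha> then 1 else 0)"

definition xvar :: "'n \<Rightarrow> ('n,'k::{zero,one}) pseries" where
  "xvar i = (\<lambda>\<gamma>. if \<gamma> = (\<lambda>j. if j = i then 1 else 0) then 1 else 0)"

definition max_ideal :: "('n,'k::zero) pseries set" where
  "max_ideal = {f. f (\<lambda>_. 0) = 0}"

definition submodule_E :: "('n,'k::comm_ring_1) inj_hull set \<Rightarrow> bool" where
  "submodule_E N \<longleftrightarrow> N \<subseteq> Eset \<and> (\<lambda>_. 0) \<in> N
     \<and> (\<forall>\<eta>\<in>N. \<forall>\<eta>'\<in>N. (\<lambda>\<beta>. \<eta> \<beta> + \<eta>' \<beta>) \<in> N)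
     \<and> (\<forall>f. \<forall>\<eta>\<in>N. act f \<eta> \<in> N)"

definition gen_submodule :: "('n,'k::comm_ring_1) inj_hull set \<Rightarrow> ('n,'k) inj_hull set" where
  "gen_submodule A = \<Inter>{M. submodule_E M \<and> A \<subseteq> M}"

definition colon_m :: "('n,'k::comm_ring_1) inj_hull set \<Rightarrow> ('n,'k) inj_hull set" where
  "colon_m N = {\<eta>\<in>Eset. \<forall>f\<in>max_ideal. act f \<eta> \<in> N}"

text \<open>Term order, given as the non-strict order le on exponents (alpha <= beta iff
  1/x^(alpha+1) precedes-or-equals 1/x^(beta+1)).\<close>
definition term_order :: "('n expo \<Rightarrow> 'n expo \<Rightarrow> bool) \<Rightarrow> bool" where
  "term_order le \<longleftrightarrow>
     (\<forall>\<alpha>. le \<alpha> \<alpha>) \<and>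
     (\<forall>\<alpha> \<beta>. le \<alpha> \<beta> \<and> le \<beta> \<alpha> \<longrightarrow> \<alpha> = \<beta>) \<and>
     (\<forall>\<alpha> \<beta> \<gamma>. le \<alpha> \<beta> \<and> le \<beta> \<gamma> \<longrightarrow> le \<alpha> \<gamma>) \<and>
     (\<forall>\<alpha> \<beta>. le \<alpha> \<beta> \<or> le \<beta> \<alpha>) \<and>
     (\<forall>\<alpha>. le (\<lambda>_. 0) \<alpha>) \<and>
     (\<forall>\<alpha> \<beta> \<gamma>. le \<alpha> \<beta> \<and> \<alpha> \<noteq> \<beta> \<longrightarrow>
        le (\<lambda>j. \<alpha> j + \<gamma> j) (\<lambda>j. \<beta> j + \<gamma> j) \<and> (\<lambda>j. \<alpha> j + \<gamma> j) \<noteq> (\<lambda>j. \<beta> j + \<gamma> j))"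

definition LT :: "('n expo \<Rightarrow> 'n expo \<Rightarrow> bool) \<Rightarrow> ('n,'k::zero) inj_hull \<Rightarrow> 'n expo" where
  "LT le \<eta> = (THE \<alpha>. \<eta> \<alpha> \<noteq> 0 \<and> (\<forall>\<beta>. \<eta> \<beta> \<noteq> 0 \<longrightarrow> le \<beta> \<alpha>))"

definition LT_set :: "('n expo \<Rightarrow> 'n expo \<Rightarrow> bool) \<Rightarrow> ('n,'k::{zero,one}) inj_hull set \<Rightarrow> ('n,'k) inj_hull set" where
  "LT_set le N = {term_E (LT le \<eta>) | \<eta>. \<eta> \<in> N \<and> \<eta> \<noteq> (\<lambda>_. 0)}"

end

theory Submission
  imports Defs "HOL-Library.FuncSet"
begin

definition ev :: "'n \<Rightarrow> 'n expo" where
  "ev i = (\<lambda>j. if j = i then 1 else 0)"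

lemma act_term:
  "act f (term_E a :: ('n,'k::field) inj_hull) =
     (\<lambda>\<delta>. if (\<forall>j. \<delta> j \<le> a j) then f (\<lambda>j. a j - \<delta> j) else 0)"
proof
  fix \<delta> :: "'n expo"
  have set: "{\<gamma>. (term_E a :: ('n,'k) inj_hull) (\<lambda>j. \<delta> j + \<gamma> j) \<noteq> 0} =
     {\<gamma>. (\<lambda>j. \<delta> j + \<gamma> j) = a}" by (simp add: term_E_def)
  show "act f (term_E a :: ('n,'k) inj_hull) \<delta> =
     (if (\<forall>j. \<delta> j \<le> a j) then f (\<lambda>j. a j - \<delta> j) else 0)"
  proof (cases "\<forall>j. \<delta> j \<le> a j")
    case True
    have "{\<gamma>. (\<lambda>j. \<delta> j + \<gamma> j) = a} = {\<lambda>j. a j - \<delta> j}"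
    proof (rule set_eqI, rule iffI)
      fix \<gamma> assume "\<gamma> \<in> {\<gamma>. (\<lambda>j. \<delta> j + \<gamma> j) = a}"
      then have "\<And>j. \<delta> j + \<gamma> j = a j" by (metis (mono_tags) mem_Collect_eq)
      then have "\<gamma> = (\<lambda>j. a j - \<delta> j)" by (metis add_diff_cancel_left')
      then show "\<gamma> \<in> {\<lambda>j. a j - \<delta> j}" by simp
    next
      fix \<gamma> assume "\<gamma> \<in> {\<lambda>j. a j - \<delta> j}"
      then show "\<gamma> \<in> {\<gamma>. (\<lambda>j. \<delta> j + \<gamma> j) = a}" using True by auto
    qed
    moreover have "(\<lambda>j. \<delta> j + (a j - \<delta> j)) = a" using True by auto
    ultimately show ?thesis using True
      unfolding act_def set by (simp add: term_E_def)
  next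
    case False
    have "{\<gamma>. (\<lambda>j. \<delta> j + \<gamma> j) = a} = {}"
      using False by (auto dest!: fun_cong)
    then have "act f (term_E a :: ('n,'k) inj_hull) \<delta> = 0" unfolding act_def set by simp
    then show ?thesis using False by presburger
  qed
qed

lemma act_xvar:
  assumes "inE (\<eta> :: ('n,'k::field) inj_hull)"
  shows "act (xvar i) \<eta> = (\<lambda>\<delta>. \<eta> (\<lambda>j. \<delta> j + ev i j))"
proof
  fix \<delta> :: "'n expo"
  let ?S = "{\<gamma>. \<eta> (\<lambda>j. \<delta> j + \<gamma> j) \<noteq> 0}"
  have inj: "inj (\<lambda>\<gamma>::'n expo. (\<lambda>j. \<delta> j + \<gamma> j))"
  proof (rule injI)
    fix x y :: "'n expo" assume h: "(\<lambda>j. \<delta> j + x j) = (\<lambda>j. \<delta> j + y j)"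
    show "x = y"
    proof
      fix j show "x j = y j" using fun_cong[OF h, of j] by simp
    qed
  qed
  have e: "?S = (\<lambda>\<gamma>. (\<lambda>j. \<delta> j + \<gamma> j)) -` {\<alpha>. \<eta> \<alpha> \<noteq> 0}" by simp
  have fin: "finite ?S" unfolding e
    by (rule finite_vimageI[OF _ inj]) (use assms in \<open>simp add: inE_def\<close>)
  have "act (xvar i) \<eta> \<delta> = (\<Sum>\<gamma>\<in>?S. if \<gamma> = ev i then \<eta> (\<lambda>j. \<delta> j + \<gamma> j) else 0)"
    unfolding act_def xvar_def ev_def by (rule sum.cong) simp_all
  also have "\<dots> = (if ev i \<in> ?S then \<eta> (\<lambda>j. \<delta> j + ev i j) else 0)"
    using sum.delta[OF fin, of "ev i" "\<lambda>\<gamma>. \<eta> (\<lambda>j. \<delta> j + \<gamma> j)"] by simp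
  also have "\<dots> = \<eta> (\<lambda>j. \<delta> j + ev i j)" by simp
  finally show "act (xvar i) \<eta> \<delta> = \<eta> (\<lambda>j. \<delta> j + ev i j)" .
qed

lemma to_refl: "term_order le \<Longrightarrow> le a a" unfolding term_order_def by blast
lemma to_antisym: "term_order le \<Longrightarrow> le a b \<Longrightarrow> le b a \<Longrightarrow> a = b" unfolding term_order_def by blast
lemma to_trans: "term_order le \<Longrightarrow> le a b \<Longrightarrow> le b c \<Longrightarrow> le a c" unfolding term_order_def by blast
lemma to_total: "term_order le \<Longrightarrow> le a b \<or> le b a" unfolding term_order_def by blast
lemma to_mono: "term_order le \<Longrightarrow> le a b \<Longrightarrow> a \<noteq> b \<Longrightarrow>
        le (\<lambda>j. a j + c j) (\<lambda>j. b j + c j) \<and> (\<lambda>j. a j + c j) \<noteq> (\<lambda>j. b j + c j)"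
  unfolding term_order_def by blast

lemma max_ex:
  assumes "term_order le" "finite S" "S \<noteq> {}"
  shows "\<exists>a\<in>S. \<forall>b\<in>S. le b a"
  using assms(2,3)
proof (induction S rule: finite_ne_induct)
  case (singleton x) then show ?case using to_refl[OF assms(1)] by auto
next
  case (insert x F)
  then obtain a where a: "a \<in> F" "\<forall>b\<in>F. le b a" by auto
  show ?case
  proof (cases "le x a")
    case True then show ?thesis using a by auto
  next
    case False
    hence "le a x" using to_total[OF assms(1)] by blast
    then show ?thesis using a to_trans[OF assms(1)] to_refl[OF assms(1)] by blast
  qed
qed

lemma LT_eq:
  assumes "term_order le" "\<eta> a \<noteq> 0" "\<forall>\<beta>. \<eta> \<beta> \<noteq> 0 \<longrightarrow> le \<beta> a"
  shows "LT le \<eta> = a"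
  unfolding LT_def
proof (rule the_equality)
  show "\<eta> a \<noteq> 0 \<and> (\<forall>\<beta>. \<eta> \<beta> \<noteq> 0 \<longrightarrow> le \<beta> a)" using assms by auto
next
  fix b assume "\<eta> b \<noteq> 0 \<and> (\<forall>\<beta>. \<eta> \<beta> \<noteq> 0 \<longrightarrow> le \<beta> b)"
  then show "b = a" using assms to_antisym[OF assms(1)] by blast
qed

lemma LT_prop:
  assumes "term_order le" "inE \<eta>" "\<eta> \<noteq> (\<lambda>_. 0)"
  shows "\<eta> (LT le \<eta>) \<noteq> 0 \<and> (\<forall>\<beta>. \<eta> \<beta> \<noteq> 0 \<longrightarrow> le \<beta> (LT le \<eta>))"
proof -
  have ne: "{\<alpha>. \<eta> \<alpha> \<noteq> 0} \<noteq> {}" using assms(3) by auto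
  have "finite {\<alpha>. \<eta> \<alpha> \<noteq> 0}" using assms(2) unfolding inE_def .
  then obtain a where a: "a \<in> {\<alpha>. \<eta> \<alpha> \<noteq> 0}" "\<forall>b\<in>{\<alpha>. \<eta> \<alpha> \<noteq> 0}. le b a"
    using max_ex[OF assms(1) _ ne] by blast
  then have a2: "\<eta> a \<noteq> 0" "\<forall>b. \<eta> b \<noteq> 0 \<longrightarrow> le b a" by auto
  then show ?thesis using LT_eq[OF assms(1) a2] by simp
qed

lemma LT_shift:
  fixes \<eta> :: "('n, 'k::field) inj_hull"
  assumes le: "term_order le" and N: "submodule_E N" and eta: "\<eta> \<in> colon_m N"
    and nz: "\<eta> \<noteq> (\<lambda>_. 0)" and pos: "LT le \<eta> i \<ge> 1"
  shows "term_E (\<lambda>j. LT le \<eta> j - ev i j) \<in> LT_set le N"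
proof -
  define \<alpha> where "\<alpha> = LT le \<eta>"
  have inE: "inE \<eta>" using eta unfolding colon_m_def Eset_def by auto
  have LP: "\<eta> \<alpha> \<noteq> 0" "\<forall>\<beta>. \<eta> \<beta> \<noteq> 0 \<longrightarrow> le \<beta> \<alpha>"
    using LT_prop[OF le inE nz] unfolding \<alpha>_def by auto
  define \<zeta> where "\<zeta> = act (xvar i) \<eta>"
  have xm: "xvar i \<in> max_ideal"
    unfolding max_ideal_def xvar_def by (auto dest: fun_cong[of _ _ i])
  have zN: "\<zeta> \<in> N" using eta xm unfolding \<zeta>_def colon_m_def by auto
  have zeq: "\<zeta> = (\<lambda>\<delta>. \<eta> (\<lambda>j. \<delta> j + ev i j))" unfolding \<zeta>_def by (rule act_xvar[OF inE])
  define aa where "aa = (\<lambda>j. \<alpha> j - ev i j)"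
  have bk: "(\<lambda>j. aa j + ev i j) = \<alpha>"
    using pos unfolding aa_def \<alpha>_def ev_def by auto
  have z1: "\<zeta> aa \<noteq> 0" using zeq bk LP by simp
  have z2: "\<forall>\<beta>. \<zeta> \<beta> \<noteq> 0 \<longrightarrow> le \<beta> aa"
  proof (intro allI impI)
    fix \<beta> assume "\<zeta> \<beta> \<noteq> 0"
    hence h: "le (\<lambda>j. \<beta> j + ev i j) \<alpha>" using zeq LP by auto
    show "le \<beta> aa"
    proof (rule ccontr)
      assume nle: "\<not> le \<beta> aa"
      hence "le aa \<beta> \<and> aa \<noteq> \<beta>" using to_total[OF le] to_refl[OF le] by metis
      hence "le (\<lambda>j. aa j + ev i j) (\<lambda>j. \<beta> j + ev i j) \<and>
             (\<lambda>j. aa j + ev i j) \<noteq> (\<lambda>j. \<beta> j + ev i j)"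
        using to_mono[OF le] by blast
      hence "le \<alpha> (\<lambda>j. \<beta> j + ev i j) \<and> \<alpha> \<noteq> (\<lambda>j. \<beta> j + ev i j)" using bk by simp
      then show False using h to_antisym[OF le] by blast
    qed
  qed
  have "LT le \<zeta> = aa" by (rule LT_eq[OF le z1 z2])
  hence teq: "term_E (\<lambda>j. LT le \<eta> j - ev i j) = term_E (LT le \<zeta>)" unfolding aa_def \<alpha>_def by simp
  have zz: "\<zeta> \<noteq> (\<lambda>_. 0)" using z1 by auto
  show ?thesis unfolding LT_set_def using teq zN zz by blast
qed

lemma sub_zero: "submodule_E M \<Longrightarrow> (\<lambda>_. 0) \<in> M"
  unfolding submodule_E_def by (elim conjE)
lemma sub_add: "submodule_E M \<Longrightarrow> x \<in> M \<Longrightarrow> y \<in> M \<Longrightarrow> (\<lambda>\<beta>. x \<beta> + y \<beta>) \<in> M"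
  unfolding submodule_E_def by (elim conjE) (drule bspec, assumption, drule bspec, assumption)
lemma sub_act: "submodule_E M \<Longrightarrow> x \<in> M \<Longrightarrow> act f x \<in> M"
  unfolding submodule_E_def by (elim conjE) (drule spec, drule bspec, assumption)

lemma single_in:
  fixes M :: "('n::finite, 'k::field) inj_hull set"
  assumes le: "term_order le" and N: "submodule_E N" and eta: "\<eta> \<in> colon_m N"
    and nz: "\<eta> \<noteq> (\<lambda>_. 0)" and M: "submodule_E M" and sub: "LT_set le N \<subseteq> M"
    and b: "\<forall>j. b j \<le> LT le \<eta> j" "b \<noteq> LT le \<eta>"
  shows "(\<lambda>\<delta>. if \<delta> = b then c else 0) \<in> M"
proof -
  define \<alpha> where "\<alpha> = LT le \<eta>"
  have "\<exists>j. b j \<noteq> \<alpha> j"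
  proof (rule ccontr)
    assume "\<not> (\<exists>j. b j \<noteq> \<alpha> j)"
    hence "b = \<alpha>" by auto
    then show False using b(2) \<alpha>_def by simp
  qed
  then obtain i where "b i \<noteq> \<alpha> i" by blast
  hence i: "b i < \<alpha> i" using b(1) \<alpha>_def le_neq_implies_less by blast
  define aa where "aa = (\<lambda>j. \<alpha> j - ev i j)"
  have "term_E aa \<in> LT_set le N" unfolding aa_def \<alpha>_def
    by (rule LT_shift[OF le N eta nz]) (use i \<alpha>_def in auto)
  hence tM: "term_E aa \<in> M" using sub by auto
  have bl: "\<forall>j. b j \<le> aa j"
  proof
    fix j show "b j \<le> aa j"
    proof (cases "j = i")
      case True then show ?thesis using i unfolding aa_def ev_def by simp
    next
      case False then show ?thesis using b(1) unfolding aa_def ev_def \<alpha>_def by simp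
    qed
  qed
  define g :: "('n,'k) pseries" where "g = (\<lambda>\<gamma>. if \<gamma> = (\<lambda>j. aa j - b j) then c else 0)"
  have "act g (term_E aa) = (\<lambda>\<delta>. if \<delta> = b then c else 0)"
  proof
    fix \<delta>
    have iff: "((\<forall>j. \<delta> j \<le> aa j) \<and> (\<lambda>j. aa j - \<delta> j) = (\<lambda>j. aa j - b j)) \<longleftrightarrow> \<delta> = b"
    proof
      assume h: "(\<forall>j. \<delta> j \<le> aa j) \<and> (\<lambda>j. aa j - \<delta> j) = (\<lambda>j. aa j - b j)"
      show "\<delta> = b"
      proof
        fix j
        have e: "aa j - \<delta> j = aa j - b j" using fun_cong[OF conjunct2[OF h], of j] by simp
        have l1: "\<delta> j \<le> aa j" using conjunct1[OF h] by blast
        have l2: "b j \<le> aa j" using bl by blast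
        show "\<delta> j = b j" using e l1 l2 by arith
      qed
    next
      assume "\<delta> = b" then show "(\<forall>j. \<delta> j \<le> aa j) \<and> (\<lambda>j. aa j - \<delta> j) = (\<lambda>j. aa j - b j)"
        using bl by simp
    qed
    have A: "act g (term_E aa) \<delta> = (if (\<forall>j. \<delta> j \<le> aa j) \<and> (\<lambda>j. aa j - \<delta> j) = (\<lambda>j. aa j - b j) then c else 0)"
      unfolding act_term g_def by simp
    show "act g (term_E aa) \<delta> = (if \<delta> = b then c else 0)"
      by (simp only: A iff)
  qed
  moreover have "act g (term_E aa) \<in> M" by (rule sub_act[OF M tM])
  ultimately show ?thesis by simp
qed

lemma fin_below: "finite {\<beta>::('n::finite) expo. \<forall>j. \<beta> j \<le> a j}"
proof -
  have "{\<beta>::'n expo. \<forall>j. \<beta> j \<le> a j} \<subseteq> Pi\<^sub>E UNIV (\<lambda>j. {0..a j})"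
    by (auto simp: PiE_def extensional_def)
  then show ?thesis by (rule finite_subset) (simp add: finite_PiE)
qed

lemma part1:
  fixes M :: "('n::finite, 'k::field) inj_hull set"
  assumes le: "term_order le" and N: "submodule_E N" and eta: "\<eta> \<in> colon_m N"
    and nz: "\<eta> \<noteq> (\<lambda>_. 0)" and M: "submodule_E M" and sub: "LT_set le N \<subseteq> M"
  shows "finite A \<Longrightarrow> A \<subseteq> {b. (\<forall>j. b j \<le> LT le \<eta> j) \<and> b \<noteq> LT le \<eta>} \<Longrightarrow>
     {\<delta>. \<phi> \<delta> \<noteq> 0} \<subseteq> A \<Longrightarrow> \<phi> \<in> M"
proof (induction A arbitrary: \<phi> rule: finite_induct)
  case empty
  then have "\<phi> = (\<lambda>_. 0)" by auto
  then show ?case using sub_zero[OF M] by simp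
next
  case (insert b A)
  define \<phi>' where "\<phi>' = \<phi>(b := 0)"
  have AD: "A \<subseteq> {b. (\<forall>j. b j \<le> LT le \<eta> j) \<and> b \<noteq> LT le \<eta>}" using insert.prems(1) by blast
  have bD: "(\<forall>j. b j \<le> LT le \<eta> j)" "b \<noteq> LT le \<eta>" using insert.prems(1) by blast+
  have sA: "{\<delta>. \<phi>' \<delta> \<noteq> 0} \<subseteq> A"
  proof
    fix x assume x: "x \<in> {\<delta>. \<phi>' \<delta> \<noteq> 0}"
    then have "x \<noteq> b" unfolding \<phi>'_def by auto
    moreover have "\<phi> x \<noteq> 0" using x \<open>x \<noteq> b\<close> unfolding \<phi>'_def by simp
    ultimately show "x \<in> A" using insert.prems(2) by blast
  qed
  have p1: "\<phi>' \<in> M" by (rule insert.IH[OF AD sA])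
  have p2: "(\<lambda>\<delta>. if \<delta> = b then \<phi> b else 0) \<in> M"
    by (rule single_in[OF le N eta nz M sub bD])
  have "(\<lambda>\<beta>. \<phi>' \<beta> + (if \<beta> = b then \<phi> b else 0)) \<in> M"
    by (rule sub_add[OF M p1 p2])
  moreover have "(\<lambda>\<beta>. \<phi>' \<beta> + (if \<beta> = b then \<phi> b else 0)) = \<phi>" unfolding \<phi>'_def by auto
  ultimately show ?case by simp
qed

theorem lemma3p5:
  fixes le :: "('n::finite) expo \<Rightarrow> 'n expo \<Rightarrow> bool"
    and N :: "('n, 'k::field) inj_hull set"
    and \<eta> :: "('n, 'k) inj_hull"
  assumes "term_order le"
    and "submodule_E N"
    and "\<eta> \<in> colon_m N"
    and "\<eta> \<noteq> (\<lambda>_. 0)"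
  shows "(term_E (LT le \<eta>) :: ('n,'k) inj_hull) \<in> colon_m (gen_submodule (LT_set le N))
    \<and> (\<forall>i. act (xvar i) (term_E (LT le \<eta>)) = (\<lambda>_. (0::'k))
           \<or> act (xvar i) (term_E (LT le \<eta>)) \<in> LT_set le N)"
proof
  define \<alpha> where "\<alpha> = LT le \<eta>"
  have tE: "(term_E \<alpha> :: ('n,'k) inj_hull) \<in> Eset"
    unfolding Eset_def inE_def term_E_def by auto
  show "(term_E (LT le \<eta>) :: ('n,'k) inj_hull) \<in> colon_m (gen_submodule (LT_set le N))"
    unfolding colon_m_def
  proof (intro CollectI conjI ballI)
    show "(term_E (LT le \<eta>) :: ('n,'k) inj_hull) \<in> Eset" using tE \<alpha>_def by simp
  next
    fix f :: "('n,'k) pseries" assume f: "f \<in> max_ideal"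
    let ?D = "{b. (\<forall>j. b j \<le> LT le \<eta> j) \<and> b \<noteq> LT le \<eta>}"
    have fD: "finite ?D" by (rule finite_subset[OF _ fin_below]) auto
    have supp: "{\<delta>. act f (term_E (LT le \<eta>)) \<delta> \<noteq> 0} \<subseteq> ?D"
    proof
      fix \<delta> assume "\<delta> \<in> {\<delta>. act f (term_E (LT le \<eta>)) \<delta> \<noteq> (0::'k)}"
      hence h: "(\<forall>j. \<delta> j \<le> LT le \<eta> j) \<and> f (\<lambda>j. LT le \<eta> j - \<delta> j) \<noteq> 0"
        unfolding act_term by (auto split: if_splits)
      moreover have "\<delta> \<noteq> LT le \<eta>"
      proof
        assume "\<delta> = LT le \<eta>"
        hence "(\<lambda>j. LT le \<eta> j - \<delta> j) = (\<lambda>_. 0)" by auto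
        then show False using h f unfolding max_ideal_def by auto
      qed
      ultimately show "\<delta> \<in> ?D" by auto
    qed
    show "act f (term_E (LT le \<eta>)) \<in> gen_submodule (LT_set le N)"
      unfolding gen_submodule_def
    proof (intro InterI, clarify)
      fix M :: "('n,'k) inj_hull set"
      assume "submodule_E M" "LT_set le N \<subseteq> M"
      then show "act f (term_E (LT le \<eta>)) \<in> M"
        using part1[OF assms \<open>submodule_E M\<close> \<open>LT_set le N \<subseteq> M\<close> fD _ supp] by simp
    qed
  qed
next
  show "\<forall>i. act (xvar i) (term_E (LT le \<eta>)) = (\<lambda>_. (0::'k))
           \<or> act (xvar i) (term_E (LT le \<eta>)) \<in> LT_set le N"
  proof
    fix i :: 'n
    have xv: "xvar i = (\<lambda>\<gamma>. if \<gamma> = ev i then (1::'k) else 0)"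
      unfolding xvar_def ev_def by simp
    show "act (xvar i) (term_E (LT le \<eta>)) = (\<lambda>_. (0::'k))
           \<or> act (xvar i) (term_E (LT le \<eta>)) \<in> LT_set le N"
    proof (cases "LT le \<eta> i \<ge> 1")
      case True
      have "act (xvar i) (term_E (LT le \<eta>)) = (term_E (\<lambda>j. LT le \<eta> j - ev i j) :: ('n,'k) inj_hull)"
      proof
        fix \<delta>
        have iff: "((\<forall>j. \<delta> j \<le> LT le \<eta> j) \<and> (\<lambda>j. LT le \<eta> j - \<delta> j) = ev i)
              \<longleftrightarrow> \<delta> = (\<lambda>j. LT le \<eta> j - ev i j)"
        proof
          assume h: "(\<forall>j. \<delta> j \<le> LT le \<eta> j) \<and> (\<lambda>j. LT le \<eta> j - \<delta> j) = ev i"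
          show "\<delta> = (\<lambda>j. LT le \<eta> j - ev i j)"
          proof
            fix j
            have "LT le \<eta> j - \<delta> j = ev i j" using h by metis
            then show "\<delta> j = LT le \<eta> j - ev i j" using h by (metis diff_diff_cancel)
          qed
        next
          assume "\<delta> = (\<lambda>j. LT le \<eta> j - ev i j)"
          then show "(\<forall>j. \<delta> j \<le> LT le \<eta> j) \<and> (\<lambda>j. LT le \<eta> j - \<delta> j) = ev i"
            using True by (auto simp: ev_def)
        qed
        have A: "act (xvar i) (term_E (LT le \<eta>) :: ('n,'k) inj_hull) \<delta> = (if (\<forall>j. \<delta> j \<le> LT le \<eta> j) \<and> (\<lambda>j. LT le \<eta> j - \<delta> j) = ev i then 1 else 0)"
          unfolding act_term xv by simp
        have B: "(term_E (\<lambda>j. LT le \<eta> j - ev i j) :: ('n,'k) inj_hull) \<delta> = (if \<delta> = (\<lambda>j. LT le \<eta> j - ev i j) then 1 else 0)"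
          by (simp add: term_E_def)
        show "act (xvar i) (term_E (LT le \<eta>)) \<delta> = (term_E (\<lambda>j. LT le \<eta> j - ev i j) :: ('n,'k) inj_hull) \<delta>"
          by (simp only: A B iff)
      qed
      then show ?thesis using LT_shift[OF assms True] by simp
    next
      case False
      have "act (xvar i) (term_E (LT le \<eta>)) = (\<lambda>_. (0::'k))"
      proof
        fix \<delta>
        have nc: "\<not> ((\<forall>j. \<delta> j \<le> LT le \<eta> j) \<and> (\<lambda>j. LT le \<eta> j - \<delta> j) = ev i)"
        proof
          assume h: "(\<forall>j. \<delta> j \<le> LT le \<eta> j) \<and> (\<lambda>j. LT le \<eta> j - \<delta> j) = ev i"
          hence "LT le \<eta> i - \<delta> i = 1" unfolding ev_def by metis
          then show False using False by simp
        qed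
        have A: "act (xvar i) (term_E (LT le \<eta>) :: ('n,'k) inj_hull) \<delta> = (if (\<forall>j. \<delta> j \<le> LT le \<eta> j) \<and> (\<lambda>j. LT le \<eta> j - \<delta> j) = ev i then 1 else 0)"
          unfolding act_term xv by simp
        show "act (xvar i) (term_E (LT le \<eta>)) \<delta> = (0::'k)"
          by (simp only: A nc if_False)
      qed
      then show ?thesis by simp
    qed
  qed
qed

end
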